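(* Let $\lambda>0$, $L\ge1$, and let $\Sigma\in\mathbb{R}^{d\times d}$ be symmetric positive definite with simple spectrum $\sigma_1>\cdots>\sigma_d>0$ and unit eigenvectors $u_1,\dots,u_d$. Define, with $a=\mu^\top\Sigma\mu$ and $b=\mu^\top\Sigma^2\mu$, \[ \mathcal{R}_{\mathrm{lin},L}(\mu)=\operatorname{tr}(\Sigma)-\tfrac{2\lambda}{L}\operatorname{tr}(\Sigma)a-\tfrac{2\lambda(L+1)}{L}b+\tfrac{\lambda^2(L+2)}{L^2}\operatorname{tr}(\Sigma)a^2+\tfrac{\lambda^2(L+2)(L+3)}{L^2}ab. \] For $i=1,\dots,d$ let $\mu_i^\pm=\pm\gamma_i^\star u_i$ with $\gamma_i^\star=\sqrt{\frac{\operatorname{tr}(\Sigma)+(L+1)\sigma_i}{\frac{\lambda}{L}\sigma_i(L+2)(\operatorname{tr}(\Sigma)+(L+3)\sigma_i)}}$. Then $\mathrm{crit}(\mathcal{R}_{\mathrm{lin},L})=\{0\}\cup\{\mu_i^\pm:i=1,\dots,d\}$; $\nabla^2\mathcal{R}_{\mathrm{lin},L}(0)$ is negative definite, so $0$ is a local maximum; and $\nabla^2\mathcal{R}_{\mathrm{lin},L}(\mu_i^\pm)$ is diagonal in the eigenbasis of $\Sigma$, with eigenvalue along $u_j$ equal to $8\frac{\lambda}{L}\sigma_i(\operatorname{tr}(\Sigma)+(L+1)\sigma_i)$ if $j=i$, and $2\frac{\lambda}{L}\sigma_j(\sigma_i-\sigma_j)\frac{(L-1)\operatorname{tr}(\Sigma)+(L+1)(L+3)\sigma_i}{\operatorname{tr}(\Sigma)+(L+3)\sigma_i}$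 if $j\ne i$. In particular $\nabla^2\mathcal{R}_{\mathrm{lin},L}(\mu_1^\pm)$ is positive definite, and for $i>1$ $\nabla^2\mathcal{R}_{\mathrm{lin},L}(\mu_i^\pm)$ has both positive and negative eigenvalues. Consequently $\mu_1^\pm=\pm\gamma_1^\star u_1$ are global minimizers of $\mathcal{R}_{\mathrm{lin},L}$, and $\mu_i^\pm$ is a strict saddle for every $i>1$.
   Context: $\mathcal{R}_{\mathrm{lin},L}(\mu)$ equals $\mathbb{E}\|X_1-\frac{\lambda}{L}\sum_{k=1}^L(X_1^\top\mu\mu^\top X_k)X_k\|^2$ for $X_1,\dots,X_L$ i.i.d. $\mathcal{N}(0,\Sigma)$ (a linear attention risk). *)

theory Defs
  imports "HOL-Analysis.Analysis"
begin

definition R_lin :: "real \<Rightarrow> nat \<Rightarrow> real^'n^'n \<Rightarrow> real^'n \<Rightarrow> real" where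
  "R_lin lam L S mu =
     (let a = mu \<bullet> (S *v mu); b = mu \<bullet> ((S ** S) *v mu); t = trace S; l = real L in
       t - 2 * lam / l * t * a - 2 * lam * (l + 1) / l * b
         + lam^2 * (l + 2) / l^2 * t * a^2
         + lam^2 * (l + 2) * (l + 3) / l^2 * a * b)"

definition crit :: "('a::real_normed_vector \<Rightarrow> real) \<Rightarrow> 'a set" where
  "crit f = {x. (f has_derivative (\<lambda>_. 0)) (at x)}"

definition is_hessian :: "(real^'n \<Rightarrow> real) \<Rightarrow> real^'n^'n \<Rightarrow> real^'n \<Rightarrow> bool" where
  "is_hessian f H x \<longleftrightarrow>
     (\<exists>G. (\<forall>y. (f has_derivative (\<lambda>h. G y \<bullet> h)) (at y)) \<and>
          (G has_derivative (\<lambda>h. H *v h)) (at x))"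

definition pos_def :: "real^'n^'n \<Rightarrow> bool" where
  "pos_def A \<longleftrightarrow> (\<forall>v. v \<noteq> 0 \<longrightarrow> v \<bullet> (A *v v) > 0)"

definition neg_def :: "real^'n^'n \<Rightarrow> bool" where
  "neg_def A \<longleftrightarrow> (\<forall>v. v \<noteq> 0 \<longrightarrow> v \<bullet> (A *v v) < 0)"

definition has_eigenvalue :: "real^'n^'n \<Rightarrow> real \<Rightarrow> bool" where
  "has_eigenvalue A c \<longleftrightarrow> (\<exists>v. v \<noteq> 0 \<and> A *v v = c *\<^sub>R v)"

definition local_max :: "(real^'n \<Rightarrow> real) \<Rightarrow> real^'n \<Rightarrow> bool" where
  "local_max f x \<longleftrightarrow> (\<exists>e>0. \<forall>y\<in>ball x e. f y \<le> f x)"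

definition global_min :: "(real^'n \<Rightarrow> real) \<Rightarrow> real^'n \<Rightarrow> bool" where
  "global_min f x \<longleftrightarrow> (\<forall>y. f x \<le> f y)"

definition strict_saddle :: "(real^'n \<Rightarrow> real) \<Rightarrow> real^'n \<Rightarrow> bool" where
  "strict_saddle f x \<longleftrightarrow> x \<in> crit f \<and> (\<exists>H. is_hessian f H x \<and> (\<exists>c<0. has_eigenvalue H c))"

end

theory Submission
  imports Defs
begin

lemmas mv_deriv [derivative_intros] = bounded_linear.has_derivative[OF matrix_vector_mul_bounded_linear]

lemma sym_inner: fixes A :: "real^'n^'n" assumes "transpose A = A"
  shows "x \<bullet> (A *v y) = (A *v x) \<bullet> y"
  by (metis assms dot_lmul_matrix vector_transpose_matrix)

definition "qf A m = m \<bullet> (A *v m)"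

lemma quad_deriv: fixes A :: "real^'n^'n" assumes "transpose A = A"
  shows "(qf A has_derivative (\<lambda>h. (2 *\<^sub>R (A *v x)) \<bullet> h)) (at x)"
  unfolding qf_def[abs_def]
  apply (rule derivative_eq_intros)
    apply (rule derivative_intros)
   apply (rule derivative_intros)
   apply (rule derivative_intros)
  using sym_inner[OF assms] by (auto simp: inner_commute algebra_simps fun_eq_iff)

definition "cp lam (L::nat) t = 2*lam/real L*t"
definition "cq lam (L::nat) = 2*lam*(real L+1)/real L"
definition "cr lam (L::nat) t = lam^2*(real L+2)/(real L)^2*t"
definition "cw lam (L::nat) = lam^2*(real L+2)*(real L+3)/(real L)^2"

lemma R_alt: "R_lin lam L S m = trace S - cp lam L (trace S) * (qf S m) - cq lam L * (qf (S**S) m)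
   + cr lam L (trace S) * (qf S m)^2 + cw lam L * (qf S m) * (qf (S**S) m)"
  unfolding qf_def R_lin_def cp_def cq_def cr_def cw_def Let_def by simp

definition "gR lam L S m = (2*(- cp lam L (trace S) + 2*cr lam L (trace S)*(qf S m) + cw lam L * (qf (S**S) m))) *\<^sub>R (S *v m)
   + (2*(- cq lam L + cw lam L * (qf S m))) *\<^sub>R ((S**S) *v m)"

definition "HR lam L S m h = (2*(2*cr lam L (trace S)*(2*((S *v m) \<bullet> h)) + cw lam L*(2*(((S**S) *v m) \<bullet> h)))) *\<^sub>R (S *v m)
   + (2*(- cp lam L (trace S) + 2*cr lam L (trace S)*(qf S m) + cw lam L * (qf (S**S) m))) *\<^sub>R (S *v h)
   + (2*cw lam L*(2*((S *v m) \<bullet> h))) *\<^sub>R ((S**S) *v m)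
   + (2*(- cq lam L + cw lam L * (qf S m))) *\<^sub>R ((S**S) *v h)"

lemma symSS: fixes S :: "real^'n^'n" assumes "transpose S = S" shows "transpose (S**S) = S**S"
  by (metis assms matrix_transpose_mul)

lemma R_deriv: fixes S :: "real^'n^'n" assumes "transpose S = S"
  shows "(R_lin lam L S has_derivative (\<lambda>h. gR lam L S x \<bullet> h)) (at x)"
proof -
  note a = quad_deriv[OF assms, of x] and b = quad_deriv[OF symSS[OF assms], of x]
  show ?thesis unfolding R_alt[abs_def]
    apply (rule has_derivative_eq_rhs)
    apply (rule derivative_intros a b)+
    unfolding gR_def
    by (auto simp: fun_eq_iff inner_add_left algebra_simps power2_eq_square)
qed

lemma H_deriv: fixes S :: "real^'n^'n" assumes "transpose S = S"
  shows "(gR lam L S has_derivative (HR lam L S x)) (at x)"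
proof -
  note a = quad_deriv[OF assms, of x] and b = quad_deriv[OF symSS[OF assms], of x]
  show ?thesis unfolding gR_def[abs_def]
    apply (rule has_derivative_eq_rhs)
    apply (rule derivative_intros a b)+
    unfolding HR_def
    by (auto simp: fun_eq_iff inner_add_left algebra_simps)
qed

locale onb =
  fixes u :: "nat \<Rightarrow> real^'n"
  assumes unit: "\<And>i. i \<in> {1..CARD('n)} \<Longrightarrow> norm (u i) = 1"
    and orth: "\<And>i j. i \<in> {1..CARD('n)} \<Longrightarrow> j \<in> {1..CARD('n)} \<Longrightarrow> i \<noteq> j \<Longrightarrow> u i \<bullet> u j = 0"
begin

lemma uu: "i \<in> {1..CARD('n)} \<Longrightarrow> u i \<bullet> u i = 1"
  using unit by (metis norm_eq_sqrt_inner real_sqrt_eq_1_iff)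

lemma uij: "i \<in> {1..CARD('n)} \<Longrightarrow> j \<in> {1..CARD('n)} \<Longrightarrow> u i \<bullet> u j = (if i = j then 1 else 0)"
  using uu orth by auto

lemma span_all: "span (u ` {1..CARD('n)}) = UNIV"
proof -
  have inj: "inj_on u {1..CARD('n)}"
    unfolding inj_on_def using uu orth by fastforce
  have ind: "independent (u ` {1..CARD('n)})"
    apply (rule pairwise_orthogonal_independent)
    unfolding pairwise_def orthogonal_def using orth apply fastforce
    using uu by fastforce
  have "card (u ` {1..CARD('n)}) = CARD('n)" using card_image[OF inj] by simp
  then have "UNIV \<subseteq> span (u ` {1..CARD('n)})"
    using card_ge_dim_independent[OF _ ind, of UNIV] by simp
  then show ?thesis by auto
qed

lemma coord_zero: assumes "\<And>j. j \<in> {1..CARD('n)} \<Longrightarrow> v \<bullet> u j = 0" shows "v = 0"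
proof -
  have "orthogonal v v"
    apply (rule orthogonal_to_span[of _ "u ` {1..CARD('n)}"])
    using span_all assms by (auto simp: orthogonal_def)
  then show ?thesis by (simp add: orthogonal_def)
qed

lemma expand: "x = (\<Sum>j\<in>{1..CARD('n)}. (x \<bullet> u j) *\<^sub>R u j)"
proof -
  have "(x - (\<Sum>j\<in>{1..CARD('n)}. (x \<bullet> u j) *\<^sub>R u j)) \<bullet> u k = 0" if k: "k \<in> {1..CARD('n)}" for k
  proof -
    have "(\<Sum>j\<in>{1..CARD('n)}. (x \<bullet> u j) *\<^sub>R u j) \<bullet> u k = (\<Sum>j\<in>{1..CARD('n)}. (x \<bullet> u j) * (if j = k then 1 else 0))"
      by (simp add: inner_sum_left uij[OF _ k])
    also have "\<dots> = x \<bullet> u k" using k by (subst sum.cong[OF refl, of _ _ "\<lambda>j. if j = k then x \<bullet> u j else 0"]) (auto simp: sum.delta)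
    finally show ?thesis by (simp add: inner_diff_left)
  qed
  then show ?thesis using coord_zero[of "x - (\<Sum>j\<in>{1..CARD('n)}. (x \<bullet> u j) *\<^sub>R u j)"] by simp
qed

lemma parseval: "x \<bullet> y = (\<Sum>j\<in>{1..CARD('n)}. (x \<bullet> u j) * (y \<bullet> u j))"
proof -
  have "y \<bullet> x = y \<bullet> (\<Sum>j\<in>{1..CARD('n)}. (x \<bullet> u j) *\<^sub>R u j)" using expand by metis
  also have "\<dots> = (\<Sum>j\<in>{1..CARD('n)}. (x \<bullet> u j) * (y \<bullet> u j))" by (simp add: inner_sum_right inner_commute)
  finally show ?thesis by (simp add: inner_commute)
qed

lemma nz_coord: assumes "x \<noteq> 0" shows "\<exists>j\<in>{1..CARD('n)}. x \<bullet> u j \<noteq> 0"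
  using coord_zero assms by blast

end

definition "GG lam L t z = (cp lam L t + cq lam L * z) / (2 * z * (cr lam L t + cw lam L * z))"

lemma K_zero_iff: fixes z r w p q g :: real assumes "z > 0" "r > 0" "w > 0"
  shows "2 * (-p+2 * r * z * g+w * z^2 * g) * z + 2 * (-q+w * z * g) * z^2 = 0 \<longleftrightarrow> g = (p+q * z)/(2 * z * (r+w * z))"
proof -
  have "r + w * z > 0" using assms by (simp add: add_pos_pos)
  then have nz: "2 * z * (r+w * z) \<noteq> 0" using assms by simp
  have e: "2 * (-p+2 * r * z * g+w * z^2 * g) * z + 2 * (-q+w * z * g) * z^2 = 2 * z * (g * (2 * z * (r+w * z)) - (p + q * z))"
    by (simp add: algebra_simps power2_eq_square)
  have "g = (p+q * z)/(2 * z * (r+w * z)) \<longleftrightarrow> g * (2 * z * (r+w * z)) = p + q * z"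
    using nz by (simp add: field_simps)
  also have "\<dots> \<longleftrightarrow> 2 * z * (g * (2 * z * (r+w * z)) - (p + q * z)) = 0"
    using assms by simp
  finally show ?thesis unfolding e by simp
qed

lemma cpos: assumes "lam > 0" "L \<ge> 1" "t > 0"
  shows "cp lam L t > 0" "cq lam L > 0" "cr lam L t > 0" "cw lam L > 0"
  using assms unfolding cp_def cq_def cr_def cw_def by auto

lemma num_rw: assumes "L \<ge> 1" shows "cp lam L t + cq lam L * z = 2 * lam / real L * (t + (real L + 1) * z)"
  using assms unfolding cp_def cq_def by (simp add: field_simps)

lemma den_rw: assumes "L \<ge> 1" shows "cr lam L t + cw lam L * z = lam^2 * (real L + 2) / (real L)^2 * (t + (real L + 3) * z)"
  using assms unfolding cr_def cw_def by (simp add: field_simps)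

lemma den_pos: assumes "lam > 0" "L \<ge> 1" "t > 0" "z > 0" shows "cr lam L t + cw lam L * z > 0"
  using cpos[OF assms(1-3)] assms(4) by (simp add: add_pos_pos)

lemma g1: fixes lam l z a b :: real assumes "lam \<noteq> 0" "l \<noteq> 0" "z \<noteq> 0" "b \<noteq> 0" "l + 2 \<noteq> 0"
  shows "(2 * lam / l * a) / (2 * z * (lam^2 * (l+2) / l^2 * b)) = a / (lam / l * z * (l + 2) * b)"
  apply (subst frac_eq_eq)
  using assms apply simp
  using assms apply simp
  using assms by (simp add: field_simps power2_eq_square)

lemma g2: fixes lam l z a b t :: real assumes "lam \<noteq> 0" "l \<noteq> 0" "z \<noteq> 0" "b \<noteq> 0" "l + 2 \<noteq> 0"
  and "a = t + (l+1) * z" "b = t + (l + 3) * z"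
  shows "2 * lam * (l+1) / l - lam^2 * (l+2) * (l+3) / l^2 * z * ((2 * lam / l * a) / (2 * z * (lam^2 * (l+2) / l^2 * b)))
    = lam / l * (((l - 1) * t + (l + 1) * (l + 3) * z) / b)"
proof -
  have h1: "lam^2 * (l+2) * (l+3) / l^2 * z * ((2 * lam / l * a) / (2 * z * (lam^2 * (l+2) / l^2 * b)))
     = (lam^2 * (l+2) * (l+3) / l^2 * z * (2 * lam / l * a)) / (2 * z * (lam^2 * (l+2) / l^2 * b))" by simp
  also have "\<dots> = (lam * (l+3) * a) / (l * b)"
    apply (subst frac_eq_eq)
    using assms apply simp
    using assms apply simp
    using assms by (simp add: field_simps power2_eq_square)
  finally have h: "lam^2 * (l+2) * (l+3) / l^2 * z * ((2 * lam / l * a) / (2 * z * (lam^2 * (l+2) / l^2 * b))) = (lam * (l+3) * a) / (l * b)" .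
  have t: "t = b - (l+3) * z" using assms by simp
  have a: "a = b - 2 * z" using assms by (simp add: algebra_simps)
  show ?thesis unfolding h unfolding t a using assms(1-5) by (simp add: field_simps power2_eq_square)
qed
lemma GG_mul: assumes "lam > 0" "L \<ge> 1" "t > 0" "z > 0"
  shows "GG lam L t z * (cr lam L t + cw lam L * z) = (cp lam L t + cq lam L * z) / (2 * z)"
proof -
  have D: "cr lam L t + cw lam L * z \<noteq> 0" using den_pos[OF assms] by simp
  have "GG lam L t z * (cr lam L t + cw lam L * z) = ((cp lam L t + cq lam L * z) * (cr lam L t + cw lam L * z)) / ((2 * z) * (cr lam L t + cw lam L * z))"
    unfolding GG_def by simp
  also have "\<dots> = (cp lam L t + cq lam L * z) / (2 * z)" using D by (rule nonzero_mult_divide_mult_cancel_right)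
  finally show ?thesis .
qed

lemma GG_expl: assumes "L \<ge> 1"
  shows "GG lam L t z = (2 * lam / real L * (t + (real L + 1) * z)) / (2 * z * (lam^2 * (real L + 2) / (real L)^2 * (t + (real L + 3) * z)))"
  unfolding GG_def num_rw[OF assms] den_rw[OF assms] ..

lemma gam_sq: assumes "lam > 0" "L \<ge> 1" "t > 0" "z > 0"
  shows "(sqrt ((t + (real L + 1) * z) / (lam / real L * z * (real L + 2) * (t + (real L + 3) * z))))^2 = GG lam L t z"
proof -
  have A: "t + (real L + 1) * z > 0" "t + (real L + 3) * z > 0" using assms by (auto intro!: add_pos_pos)
  have l: "real L > 0" using assms by simp
  have pos: "(t + (real L + 1) * z) / (lam / real L * z * (real L + 2) * (t + (real L + 3) * z)) > 0"
    using assms A l by (intro divide_pos_pos mult_pos_pos) auto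
  have "GG lam L t z = (t + (real L + 1) * z) / (lam / real L * z * (real L + 2) * (t + (real L + 3) * z))"
    unfolding GG_expl[OF assms(2)] using A l assms by (intro g1) auto
  then show ?thesis using pos by simp
qed

lemma K_G: assumes "lam > 0" "L \<ge> 1" "t > 0" "z > 0"
  shows "-cp lam L t+2 * cr lam L t * z * GG lam L t z+cw lam L * z^2 * GG lam L t z = - (-cq lam L + cw lam L * z * GG lam L t z) * z"
proof -
  have e: "2 * z * (GG lam L t z * (cr lam L t + cw lam L * z)) = cp lam L t + cq lam L * z"
    unfolding GG_mul[OF assms] using assms(4) by simp
  have "(-cp lam L t+2 * cr lam L t * z * GG lam L t z+cw lam L * z^2 * GG lam L t z) - (- (-cq lam L + cw lam L * z * GG lam L t z) * z)
     = 2 * z * (GG lam L t z * (cr lam L t + cw lam L * z)) - (cp lam L t + cq lam L * z)"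
    by (simp add: algebra_simps power2_eq_square)
  then show ?thesis unfolding e by simp
qed

lemma qwG: assumes "lam > 0" "L \<ge> 1" "t > 0" "z > 0"
  shows "cq lam L - cw lam L * z * GG lam L t z = (lam / real L) * (((real L - 1) * t + (real L + 1) * (real L + 3) * z) /
                    (t + (real L + 3) * z))"
proof -
  have A: "t + (real L + 1) * z > 0" "t + (real L + 3) * z > 0" using assms by (auto intro!: add_pos_pos)
  have l: "real L > 0" using assms by simp
  show ?thesis unfolding GG_expl[OF assms(2)] cq_def cw_def
    apply (rule g2[where a = "t + (real L + 1) * z"])
    using A l assms by auto
qed

lemma offdiag: assumes "lam > 0" "L \<ge> 1" "t > 0" "si > 0"
  shows "2 * (-cp lam L t+2 * cr lam L t * si * GG lam L t si+cw lam L * si^2 * GG lam L t si) * sj + 2 * (-cq lam L+cw lam L * si * GG lam L t si) * sj^2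
   = 2 * (lam / real L) * sj * (si - sj) *
                   (((real L - 1) * t + (real L + 1) * (real L + 3) * si) /
                    (t + (real L + 3) * si))"
proof -
  have "2 * (-cp lam L t+2 * cr lam L t * si * GG lam L t si+cw lam L * si^2 * GG lam L t si) * sj + 2 * (-cq lam L+cw lam L * si * GG lam L t si) * sj^2
    = 2 * sj * (si - sj) * (cq lam L - cw lam L * si * GG lam L t si)"
    unfolding K_G[OF assms] by (simp add: algebra_simps power2_eq_square)
  then show ?thesis unfolding qwG[OF assms] by simp
qed

lemma GG_rw: assumes "lam > 0" "L \<ge> 1" "t > 0" "z > 0"
  shows "8 * z^2 * GG lam L t z * (cr lam L t + cw lam L * z) = 8 * (lam / real L) * z * (t + (real L + 1) * z)"
proof -
  have "8 * z^2 * GG lam L t z * (cr lam L t + cw lam L * z) = 8 * z^2 * (GG lam L t z * (cr lam L t + cw lam L * z))" by simp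
  also have "\<dots> = 8 * z^2 * ((2 * lam / real L * (t + (real L + 1) * z)) / (2 * z))"
    unfolding GG_mul[OF assms] num_rw[OF assms(2)] ..
  also have "\<dots> = 8 * (lam / real L) * z * (t + (real L + 1) * z)"
  proof -
    have "real L \<noteq> 0" using assms(2) by simp
    then show ?thesis using assms(4) by (simp add: power2_eq_square field_simps)
  qed
  finally show ?thesis .
qed

lemma diag: assumes "lam > 0" "L \<ge> 1" "t > 0" "z > 0" "c^2 = GG lam L t z"
  shows "2 * (2 * cr lam L t * (2 * (z * c)) + cw lam L * (2 * (z^2 * c))) * (z * c) + 2 * (-cp lam L t+2 * cr lam L t * z * c^2+cw lam L * z^2 * c^2) * z
     + 2 * cw lam L * (2 * (z * c)) * (z^2 * c) + 2 * (-cq lam L+cw lam L * z * c^2) * z^2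
   = 8 * (lam / real L) * z * (t + (real L + 1) * z)"
proof -
  have k: "-cp lam L t+2 * cr lam L t * z * c^2+cw lam L * z^2 * c^2 = - (-cq lam L + cw lam L * z * c^2) * z"
    using K_G[OF assms(1-4)] assms(5) by simp
  have "8 * z^2 * GG lam L t z * (cr lam L t + cw lam L * z) = 8 * (lam / real L) * z * (t + (real L + 1) * z)"
    by (rule GG_rw[OF assms(1-4)])
  then have g: "8 * z^2 * c^2 * (cr lam L t + cw lam L * z) = 8 * (lam / real L) * z * (t + (real L + 1) * z)"
    unfolding assms(5) .
  have "2 * (2 * cr lam L t * (2 * (z * c)) + cw lam L * (2 * (z^2 * c))) * (z * c) + 2 * (-cp lam L t+2 * cr lam L t * z * c^2+cw lam L * z^2 * c^2) * z
     + 2 * cw lam L * (2 * (z * c)) * (z^2 * c) + 2 * (-cq lam L+cw lam L * z * c^2) * z^2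
     = 8 * z^2 * c^2 * (cr lam L t + cw lam L * z)"
    unfolding k by (simp add: algebra_simps power2_eq_square)
  then show ?thesis using g by simp
qed
lemma gmin_arith: fixes p q r w s t a b as :: real
  assumes r: "r > 0" and w: "w > 0" and s: "s > 0" and p: "p \<ge> 0" and q: "q \<ge> 0" and pw: "p * w \<le> 2 * r * q"
    and a: "a \<ge> 0" and b0: "b \<ge> 0" and bs: "b \<le> s * a" and as: "as = (p + q * s) / (2 * (r + w * s))"
  shows "t - p * as - q * (s * as) + r * as^2 + w * as * (s * as) \<le> t - p * a - q * b + r * a^2 + w * a * b"
proof -
  define f where "f x = t - p * x - q * (s * x) + r * x^2 + w * x * (s * x)" for x
  have rw: "r + w * s > 0" using r w s by (simp add: add_pos_pos)
  have as2: "2 * (r + w * s) * as = p + q * s" using rw unfolding as by simp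
  have fmin: "f x \<ge> f as" for x
  proof -
    have "f x - f as = (r + w * s) * (x - as)^2 + (x - as) * (2 * (r + w * s) * as - (p + q * s))"
      unfolding f_def by (simp add: algebra_simps power2_eq_square)
    also have "\<dots> = (r + w * s) * (x - as)^2" unfolding as2 by simp
    also have "\<dots> \<ge> 0" using rw by simp
    finally show ?thesis by simp
  qed
  show ?thesis
  proof (cases "w * a \<le> q")
    case True
    have "(b - s * a) * (w * a - q) \<ge> 0" using True bs by (intro mult_nonpos_nonpos) auto
    then have "t - p * a - q * b + r * a^2 + w * a * b \<ge> f a" unfolding f_def by (simp add: algebra_simps power2_eq_square)
    then show ?thesis using fmin[of a] unfolding f_def by simp
  next
    case False
    define y where "y = q / w"
    have ay: "a > y" using False w unfolding y_def by (simp add: field_simps)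
    have y0: "y \<ge> 0" using q w unfolding y_def by simp
    have "b * (w * a - q) \<ge> 0" using False b0 by simp
    then have h1: "t - p * a - q * b + r * a^2 + w * a * b \<ge> t - p * a + r * a^2" by (simp add: algebra_simps)
    have "p \<le> 2 * r * y" using pw w unfolding y_def by (simp add: field_simps)
    also have "\<dots> \<le> r * (a + y)" using ay r by simp
    finally have "r * (a + y) - p \<ge> 0" by simp
    then have "(a - y) * (r * (a + y) - p) \<ge> 0" using ay by simp
    then have h2: "t - p * a + r * a^2 \<ge> t - p * y + r * y^2" by (simp add: algebra_simps power2_eq_square)
    have "w * y = q" using w unfolding y_def by simp
    then have h3: "f y = t - p * y + r * y^2" unfolding f_def by (simp add: algebra_simps power2_eq_square)
    have "f as \<le> f y" by (rule fmin)
    then show ?thesis using h1 h2 h3 unfolding f_def[of as] by linarith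
  qed
qed


lemma hess_unique: fixes S :: "real^'n^'n" assumes sym: "transpose S = S" and h: "is_hessian (R_lin lam L S) H x"
  shows "H *v v = HR lam L S x v"
proof -
  obtain G where G: "\<And>y. (R_lin lam L S has_derivative (\<lambda>h. G y \<bullet> h)) (at y)"
    and GH: "(G has_derivative (\<lambda>h. H *v h)) (at x)"
    using h unfolding is_hessian_def by blast
  have "G y = gR lam L S y" for y
  proof -
    have "(\<lambda>h. G y \<bullet> h) = (\<lambda>h. gR lam L S y \<bullet> h)"
      using has_derivative_unique[OF G[of y] R_deriv[OF sym]] .
    then have "G y \<bullet> (G y - gR lam L S y) = gR lam L S y \<bullet> (G y - gR lam L S y)" by metis
    then have "(G y - gR lam L S y) \<bullet> (G y - gR lam L S y) = 0" by (simp add: inner_diff_left)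
    then show ?thesis by simp
  qed
  then have "G = gR lam L S" by auto
  then have GH': "(gR lam L S has_derivative (\<lambda>h. H *v h)) (at x)" using GH by simp
  have "(\<lambda>h. H *v h) = HR lam L S x"
    using has_derivative_unique[OF GH' H_deriv[OF sym]] by simp
  then show ?thesis by metis
qed

lemma hess_exists: fixes S :: "real^'n^'n" assumes sym: "transpose S = S"
  shows "is_hessian (R_lin lam L S) (matrix (HR lam L S x)) x"
proof -
  have bl: "bounded_linear (HR lam L S x)" using H_deriv[OF sym] by (rule has_derivative_bounded_linear)
  have "(\<lambda>h. matrix (HR lam L S x) *v h) = HR lam L S x"
    using bl by (simp add: matrix_of_matrix_vector_mul bounded_linear.linear matrix_works)
  then show ?thesis unfolding is_hessian_def using R_deriv[OF sym] H_deriv[OF sym] by metis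
qed

lemma crit_iff: fixes S :: "real^'n^'n" assumes sym: "transpose S = S"
  shows "x \<in> crit (R_lin lam L S) \<longleftrightarrow> gR lam L S x = 0"
proof
  assume "x \<in> crit (R_lin lam L S)"
  then have "(R_lin lam L S has_derivative (\<lambda>_. 0)) (at x)" unfolding crit_def by simp
  then have "(\<lambda>_. 0) = (\<lambda>h. gR lam L S x \<bullet> h)" using has_derivative_unique R_deriv[OF sym] by blast
  then have "gR lam L S x \<bullet> gR lam L S x = 0" by metis
  then show "gR lam L S x = 0" by simp
next
  assume "gR lam L S x = 0"
  then show "x \<in> crit (R_lin lam L S)" using R_deriv[OF sym, of lam L x] unfolding crit_def by simp
qed

lemma mv_sum: fixes H :: "real^'n^'n" shows "H *v (\<Sum>j\<in>A. f j) = (\<Sum>j\<in>A. H *v f j)"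
  by (induction A rule: infinite_finite_induct) (auto simp: matrix_vector_right_distrib)

lemma trace_pos: fixes S :: "real^'n^'n" assumes "pos_def S" shows "trace S > 0"
proof -
  have "S $ k $ k > 0" for k
  proof -
    have "axis k 1 \<bullet> (S *v axis k (1::real)) > 0" using assms unfolding pos_def_def
      by (metis axis_eq_0_iff zero_neq_one)
    then show ?thesis by (simp add: inner_axis' matrix_vector_mult_basis column_def)
  qed
  then show ?thesis unfolding trace_def by (simp add: sum_pos)
qed

lemma pd_inj: fixes S :: "real^'n^'n" assumes "pos_def S" "S *v x = 0" shows "x = 0"
  using assms unfolding pos_def_def by force

context onb begin
lemma pos_def_diag: fixes H :: "real^'n^'n"
  assumes He: "\<And>j. j \<in> {1..CARD('n)} \<Longrightarrow> H *v u j = e j *\<^sub>R u j" and ep: "\<And>j. j \<in> {1..CARD('n)} \<Longrightarrow> e j > 0"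
  shows "pos_def H"
  unfolding pos_def_def
proof (intro allI impI)
  fix v :: "real^'n" assume v: "v \<noteq> 0"
  have "H *v v = H *v (\<Sum>j\<in>{1..CARD('n)}. (v \<bullet> u j) *\<^sub>R u j)" using expand by metis
  also have "\<dots> = (\<Sum>j\<in>{1..CARD('n)}. (v \<bullet> u j * e j) *\<^sub>R u j)"
    unfolding mv_sum by (rule sum.cong) (auto simp: matrix_vector_mult_scaleR He)
  finally have "v \<bullet> (H *v v) = (\<Sum>j\<in>{1..CARD('n)}. (v \<bullet> u j * e j) * (v \<bullet> u j))"
    by (simp add: inner_sum_right)
  also have "\<dots> = (\<Sum>j\<in>{1..CARD('n)}. e j * (v \<bullet> u j)^2)"
    by (rule sum.cong) (auto simp: power2_eq_square)
  also have "\<dots> > 0"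
  proof -
    obtain i where i: "i \<in> {1..CARD('n)}" "v \<bullet> u i \<noteq> 0" using nz_coord[OF v] by blast
    show ?thesis
      apply (rule sum_pos2[OF _ i(1)])
        apply simp
      using i ep apply (simp add: mult_pos_pos)
      using ep by (simp add: less_imp_le)
  qed
  finally show "v \<bullet> (H *v v) > 0" .
qed
end


locale spec = onb u for u :: "nat \<Rightarrow> real^'n" +
  fixes S :: "real^'n^'n" and sigma :: "nat \<Rightarrow> real"
  assumes sym: "transpose S = S"
    and eig: "\<And>i. i \<in> {1..CARD('n)} \<Longrightarrow> S *v u i = sigma i *\<^sub>R u i"
begin

lemma SSu: "j \<in> {1..CARD('n)} \<Longrightarrow> (S ** S) *v u j = (sigma j)^2 *\<^sub>R u j"
  by (simp add: matrix_vector_mul_assoc[symmetric] eig matrix_vector_mult_scaleR power2_eq_square)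

lemma cS: "j \<in> {1..CARD('n)} \<Longrightarrow> (S *v x) \<bullet> u j = sigma j * (x \<bullet> u j)"
  using sym_inner[OF sym, of x "u j"] eig by simp

lemma cSS: "j \<in> {1..CARD('n)} \<Longrightarrow> ((S ** S) *v x) \<bullet> u j = (sigma j)^2 * (x \<bullet> u j)"
  using sym_inner[OF symSS[OF sym], of x "u j"] SSu by simp

lemma qS: "i \<in> {1..CARD('n)} \<Longrightarrow> qf S (c *\<^sub>R u i) = c^2 * sigma i"
  unfolding qf_def by (simp add: matrix_vector_mult_scaleR eig uu power2_eq_square)

lemma qSS: "i \<in> {1..CARD('n)} \<Longrightarrow> qf (S ** S) (c *\<^sub>R u i) = c^2 * (sigma i)^2"
  unfolding qf_def by (simp add: matrix_vector_mult_scaleR SSu uu power2_eq_square)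

lemma gRc: assumes i: "i \<in> {1..CARD('n)}"
  shows "gR lam L S (c *\<^sub>R u i) = (2 * (- cp lam L (trace S) + 2 * cr lam L (trace S) * sigma i * c^2 + cw lam L * (sigma i)^2 * c^2) * sigma i
      + 2 * (- cq lam L + cw lam L * sigma i * c^2) * (sigma i)^2) *\<^sub>R (c *\<^sub>R u i)"
  unfolding gR_def qS[OF i] qSS[OF i]
  apply (simp add: matrix_vector_mult_scaleR eig[OF i] SSu[OF i] scaleR_scaleR flip: scaleR_add_left)
  apply (rule disjI1)
  by (simp add: algebra_simps power2_eq_square)

lemma HRc: assumes i: "i \<in> {1..CARD('n)}" and j: "j \<in> {1..CARD('n)}"
  shows "HR lam L S (c *\<^sub>R u i) (u j) = (if j = i then
     2 * (2 * cr lam L (trace S) * (2 * (sigma i * c)) + cw lam L * (2 * ((sigma i)^2 * c))) * (sigma i * c)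
       + 2 * (- cp lam L (trace S) + 2 * cr lam L (trace S) * sigma i * c^2 + cw lam L * (sigma i)^2 * c^2) * sigma i
       + 2 * cw lam L * (2 * (sigma i * c)) * ((sigma i)^2 * c) + 2 * (- cq lam L + cw lam L * sigma i * c^2) * (sigma i)^2
   else 2 * (- cp lam L (trace S) + 2 * cr lam L (trace S) * sigma i * c^2 + cw lam L * (sigma i)^2 * c^2) * sigma j
       + 2 * (- cq lam L + cw lam L * sigma i * c^2) * (sigma j)^2) *\<^sub>R u j"
proof (cases "j = i")
  case True
  then show ?thesis unfolding HR_def qS[OF i] qSS[OF i]
    apply (simp add: matrix_vector_mult_scaleR eig[OF i] SSu[OF i] uu[OF i] scaleR_scaleR flip: scaleR_add_left)
    apply (rule disjI1)
    by (simp add: algebra_simps power2_eq_square)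
next
  case False
  have o: "u i \<bullet> u j = 0" using orth[OF i j] False by simp
  show ?thesis unfolding HR_def qS[OF i] qSS[OF i] using False
    apply (simp add: matrix_vector_mult_scaleR eig[OF i] SSu[OF i] eig[OF j] SSu[OF j] o scaleR_scaleR flip: scaleR_add_left)
    apply (rule disjI1)
    by (simp add: algebra_simps power2_eq_square)
qed


lemma qS_sum: "qf S x = (\<Sum>j\<in>{1..CARD('n)}. sigma j * (x \<bullet> u j)^2)"
  unfolding qf_def parseval[of x "S *v x"]
  by (rule sum.cong) (auto simp: cS power2_eq_square)

lemma qSS_sum: "qf (S ** S) x = (\<Sum>j\<in>{1..CARD('n)}. (sigma j)^2 * (x \<bullet> u j)^2)"
  unfolding qf_def parseval[of x "(S ** S) *v x"]
  by (rule sum.cong) (auto simp: cSS power2_eq_square)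

lemma qSS_sq: "qf (S ** S) x = (S *v x) \<bullet> (S *v x)"
  unfolding qf_def using sym_inner[OF sym, of x "S *v x"] by (simp add: matrix_vector_mul_assoc)

end

lemma pw_le: assumes "lam > 0" "L \<ge> 1" "t > 0" shows "cp lam L t * cw lam L \<le> 2 * cr lam L t * cq lam L"
proof -
  have l: "real L \<ge> 1" using assms by simp
  define K where "K = 2 * lam^3 * (real L + 2) * t / (real L)^3"
  have K: "K \<ge> 0" unfolding K_def using assms l by simp
  have e1: "cp lam L t * cw lam L = K * (real L + 3)" unfolding K_def cp_def cw_def using l
    by (simp add: field_simps power2_eq_square power3_eq_cube)
  have e2: "2 * cr lam L t * cq lam L = K * (2 * (real L + 1))" unfolding K_def cr_def cq_def using l
    by (simp add: field_simps power2_eq_square power3_eq_cube)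
  show ?thesis unfolding e1 e2 using K l by (intro mult_left_mono) auto
qed

theorem proposition15:
  fixes lam :: real and L :: nat and S :: "real^'n^'n"
    and sigma :: "nat \<Rightarrow> real" and u :: "nat \<Rightarrow> real^'n"
  defines "d \<equiv> CARD('n)"
  defines "R \<equiv> R_lin lam L S"
  defines "gamma \<equiv> (\<lambda>i. sqrt ((trace S + (real L + 1) * sigma i) /
              (lam / real L * sigma i * (real L + 2) * (trace S + (real L + 3) * sigma i))))"
  defines "hev \<equiv> (\<lambda>i j. if j = i then 8 * (lam / real L) * sigma i * (trace S + (real L + 1) * sigma i)
              else 2 * (lam / real L) * sigma j * (sigma i - sigma j) *
                   (((real L - 1) * trace S + (real L + 1) * (real L + 3) * sigma i) /
                    (trace S + (real L + 3) * sigma i)))"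
  assumes lam: "lam > 0" and L: "L \<ge> 1"
    and sym: "transpose S = S" and pd: "pos_def S"
    and eig: "\<And>i. i \<in> {1..d} \<Longrightarrow> S *v u i = sigma i *\<^sub>R u i"
    and unit: "\<And>i. i \<in> {1..d} \<Longrightarrow> norm (u i) = 1"
    and orth: "\<And>i j. i \<in> {1..d} \<Longrightarrow> j \<in> {1..d} \<Longrightarrow> i \<noteq> j \<Longrightarrow> u i \<bullet> u j = 0"
    and decr: "\<And>i j. i \<in> {1..d} \<Longrightarrow> j \<in> {1..d} \<Longrightarrow> i < j \<Longrightarrow> sigma i > sigma j"
    and spos: "sigma d > 0"
  shows "(crit R = {0} \<union> {((s::real) * gamma i) *\<^sub>R u i | s i. s \<in> {-1, 1} \<and> i \<in> {1..d}})
    \<and> (\<forall>x. \<exists>H. is_hessian R H x)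
    \<and> (\<forall>H. is_hessian R H 0 \<longrightarrow> neg_def H)
    \<and> (local_max R 0)
    \<and> (\<forall>i\<in>{1..d}. \<forall>s::real\<in>{-1, 1}. \<forall>H. is_hessian R H ((s * gamma i) *\<^sub>R u i) \<longrightarrow>
           (\<forall>j\<in>{1..d}. H *v u j = hev i j *\<^sub>R u j))
    \<and> (\<forall>s::real\<in>{-1, 1}. \<forall>H. is_hessian R H ((s * gamma 1) *\<^sub>R u 1) \<longrightarrow> pos_def H)
    \<and> (\<forall>i\<in>{2..d}. \<forall>s::real\<in>{-1, 1}. \<forall>H. is_hessian R H ((s * gamma i) *\<^sub>R u i) \<longrightarrow>
           (\<exists>c>0. has_eigenvalue H c) \<and> (\<exists>c<0. has_eigenvalue H c))
    \<and> (\<forall>s::real\<in>{-1, 1}. global_min R ((s * gamma 1) *\<^sub>R u 1))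
    \<and> (\<forall>i\<in>{2..d}. \<forall>s::real\<in>{-1, 1}. strict_saddle R ((s * gamma i) *\<^sub>R u i))"
proof -
  interpret spec u S sigma
    apply unfold_locales using unit orth sym eig unfolding d_def by auto
  have R: "R = R_lin lam L S" by (simp add: R_def)
  have dpos: "d \<ge> 1" unfolding d_def by (simp add: Suc_leI)
  have one: "1 \<in> {1..d}" using dpos by simp
  have sp: "sigma i > 0" if i: "i \<in> {1..d}" for i
  proof (cases "i = d")
    case True then show ?thesis using spos by simp
  next
    case False then have "i < d" using i by simp
    then have "sigma i > sigma d" using decr[of i d] i dpos by simp
    then show ?thesis using spos by simp
  qed
  have s1: "sigma j \<le> sigma 1" if j: "j \<in> {1..d}" for j
    using decr[of 1 j] j one by (cases "j = 1") auto
  have sinj: "sigma i \<noteq> sigma j" if "i \<in> {1..d}" "j \<in> {1..d}" "i \<noteq> j" for i j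
    using decr[of i j] decr[of j i] that by (cases "i < j") auto
  have t0: "trace S > 0" by (rule trace_pos[OF pd])
  have l0: "real L > 0" using L by simp
  note cps = cpos[OF lam L t0]
  have gam: "(gamma i)^2 = GG lam L (trace S) (sigma i)" if i: "i \<in> {1..d}" for i
    unfolding gamma_def using gam_sq[OF lam L t0 sp[OF i]] .
  have gam0: "gamma i \<ge> 0" if i: "i \<in> {1..d}" for i
    unfolding gamma_def using sp[OF i] t0 lam l0
    by (intro real_sqrt_ge_zero less_imp_le divide_pos_pos mult_pos_pos add_pos_pos) auto
  have cgam: "(s * gamma i)^2 = GG lam L (trace S) (sigma i)" if i: "i \<in> {1..d}" and s: "s \<in> {-1, 1::real}" for i s
    using s gam[OF i] by (auto simp: power_mult_distrib)
  have Kz: "2 * (- cp lam L (trace S) + 2 * cr lam L (trace S) * sigma i * g + cw lam L * (sigma i)^2 * g) * sigma i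
      + 2 * (- cq lam L + cw lam L * sigma i * g) * (sigma i)^2 = 0 \<longleftrightarrow> g = GG lam L (trace S) (sigma i)"
    if i: "i \<in> {1..d}" for i g
    using K_zero_iff[OF sp[OF i] cps(3) cps(4), of "cp lam L (trace S)" g "cq lam L"] unfolding GG_def
    by (simp add: mult.assoc mult.commute mult.left_commute)
  have gR0: "gR lam L S ((s * gamma i) *\<^sub>R u i) = 0" if i: "i \<in> {1..d}" and s: "s \<in> {-1, 1::real}" for i s
    using gRc[of i lam L "s * gamma i"] i Kz[OF i, of "(s * gamma i)^2"] cgam[OF i s] unfolding d_def by simp
  have hev_eq: "H *v u j = hev i j *\<^sub>R u j"
    if i: "i \<in> {1..d}" and s: "s \<in> {-1, 1::real}" and H: "is_hessian R H ((s * gamma i) *\<^sub>R u i)" and j: "j \<in> {1..d}" for i s H j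
  proof -
    have "H *v u j = HR lam L S ((s * gamma i) *\<^sub>R u i) (u j)" using hess_unique[OF sym] H unfolding R by blast
    also have "\<dots> = hev i j *\<^sub>R u j"
    proof (cases "j = i")
      case True
      then show ?thesis using HRc[of i j lam L "s * gamma i"] i j diag[OF lam L t0 sp[OF i] cgam[OF i s]]
        unfolding d_def hev_def by simp
    next
      case False
      then show ?thesis using HRc[of i j lam L "s * gamma i"] i j offdiag[OF lam L t0 sp[OF i], of "sigma j"] cgam[OF i s]
        unfolding d_def hev_def by simp
    qed
    finally show ?thesis .
  qed
  have frac_pos: "((real L - 1) * trace S + (real L + 1) * (real L + 3) * sigma i) / (trace S + (real L + 3) * sigma i) > 0"
    if i: "i \<in> {1..d}" for i
    using sp[OF i] t0 L by (intro divide_pos_pos add_nonneg_pos add_pos_pos mult_nonneg_nonneg mult_pos_pos) auto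
  have hev_diag_pos: "hev i i > 0" if i: "i \<in> {1..d}" for i
    unfolding hev_def using sp[OF i] t0 lam l0 by (simp add: add_pos_pos)
  have hev_pos: "hev i j > 0" if i: "i \<in> {1..d}" and j: "j \<in> {1..d}" and ij: "sigma j < sigma i" for i j
  proof -
    have ji: "j \<noteq> i" using ij by auto
    have A: "2 * (lam / real L) * sigma j * (sigma i - sigma j) > 0"
      using sp[OF j] lam l0 ij by (intro mult_pos_pos) auto
    have "hev i j = 2 * (lam / real L) * sigma j * (sigma i - sigma j) *
                   (((real L - 1) * trace S + (real L + 1) * (real L + 3) * sigma i) /
                    (trace S + (real L + 3) * sigma i))" unfolding hev_def using ji by simp
    then show ?thesis using mult_pos_pos[OF A frac_pos[OF i]] by simp
  qed
  have hev_neg: "hev i j < 0" if i: "i \<in> {1..d}" and j: "j \<in> {1..d}" and ij: "sigma i < sigma j" for i j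
  proof -
    have ji: "j \<noteq> i" using ij by auto
    have P: "2 * (lam / real L) * sigma j > 0" using sp[OF j] lam l0 by (intro mult_pos_pos) auto
    have A: "2 * (lam / real L) * sigma j * (sigma i - sigma j) < 0"
      using mult_pos_neg[OF P, of "sigma i - sigma j"] ij by simp
    have "hev i j = 2 * (lam / real L) * sigma j * (sigma i - sigma j) *
                   (((real L - 1) * trace S + (real L + 1) * (real L + 3) * sigma i) /
                    (trace S + (real L + 3) * sigma i))" unfolding hev_def using ji by simp
    then show ?thesis using mult_neg_pos[OF A frac_pos[OF i]] by simp
  qed
  have critset: "crit R = {0} \<union> {((s::real) * gamma i) *\<^sub>R u i | s i. s \<in> {-1, 1} \<and> i \<in> {1..d}}"
  proof -
    have ci: "x \<in> crit R \<longleftrightarrow> gR lam L S x = 0" for x unfolding R by (rule crit_iff[OF sym])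
    have "gR lam L S x = 0 \<longleftrightarrow> x \<in> {0} \<union> {((s::real) * gamma i) *\<^sub>R u i | s i. s \<in> {-1, 1} \<and> i \<in> {1..d}}" for x
    proof
      assume g: "gR lam L S x = 0"
      show "x \<in> {0} \<union> {((s::real) * gamma i) *\<^sub>R u i | s i. s \<in> {-1, 1} \<and> i \<in> {1..d}}"
      proof (cases "x = 0")
        case True then show ?thesis by simp
      next
        case False
        define A where "A = 2 * (- cp lam L (trace S) + 2 * cr lam L (trace S) * qf S x + cw lam L * qf (S ** S) x)"
        define B where "B = 2 * (- cq lam L + cw lam L * qf S x)"
        have "S *v (A *\<^sub>R x + B *\<^sub>R (S *v x)) = 0" using g unfolding gR_def A_def B_def
          by (simp add: matrix_vector_right_distrib matrix_vector_mult_scaleR matrix_vector_mul_assoc)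
        then have AB: "A *\<^sub>R x + B *\<^sub>R (S *v x) = 0" using pd_inj[OF pd] by blast
        have Sx0: "S *v x \<noteq> 0" using pd_inj[OF pd] False by blast
        have Bn: "B \<noteq> 0"
        proof
          assume B0: "B = 0"
          then have "A *\<^sub>R x = 0" using AB by simp
          then have A0: "A = 0" using False by simp
          have wq: "cw lam L * qf S x = cq lam L" using B0 unfolding B_def by simp
          have qSS0: "qf (S ** S) x > 0" unfolding qSS_sq using Sx0 by simp
          have "cw lam L * (A / 2) = - cp lam L (trace S) * cw lam L + 2 * cr lam L (trace S) * (cw lam L * qf S x) + cw lam L * cw lam L * qf (S ** S) x"
            unfolding A_def by (simp add: field_simps)
          also have "\<dots> = (2 * cr lam L (trace S) * cq lam L - cp lam L (trace S) * cw lam L) + cw lam L * cw lam L * qf (S ** S) x"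
            unfolding wq by (simp add: algebra_simps)
          also have "\<dots> > 0" using pw_le[OF lam L t0] mult_pos_pos[OF mult_pos_pos[OF cps(4) cps(4)] qSS0] by linarith
          finally show False using A0 by simp
        qed
        define k where "k = - A / B"
        have "B *\<^sub>R (S *v x) = - (A *\<^sub>R x)" using AB by (simp add: eq_neg_iff_add_eq_0 add.commute)
        then have "(1 / B) *\<^sub>R (B *\<^sub>R (S *v x)) = (1 / B) *\<^sub>R (- (A *\<^sub>R x))" by simp
        then have Sx: "S *v x = k *\<^sub>R x" using Bn unfolding k_def by (simp add: scaleR_scaleR)
        have ck: "sigma j * (x \<bullet> u j) = k * (x \<bullet> u j)" if j: "j \<in> {1..d}" for j
          using cS[of j x] j Sx unfolding d_def by auto
        obtain i where i: "i \<in> {1..d}" "x \<bullet> u i \<noteq> 0" using nz_coord[OF False] unfolding d_def by blast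
        have ki: "k = sigma i" using ck[OF i(1)] i(2) by simp
        have cj0: "x \<bullet> u j = 0" if j: "j \<in> {1..d}" and ji: "j \<noteq> i" for j
        proof -
          have "(sigma j - sigma i) * (x \<bullet> u j) = 0" using ck[OF j] ki by (simp add: algebra_simps)
          then show ?thesis using sinj[OF j i(1) ji] by simp
        qed
        define c where "c = x \<bullet> u i"
        have xe: "x = c *\<^sub>R u i"
        proof -
          have "x - c *\<^sub>R u i = 0"
          proof (rule coord_zero)
            fix j assume j: "j \<in> {1..CARD('n)}"
            show "(x - c *\<^sub>R u i) \<bullet> u j = 0"
              using cj0[of j] j i(1) uij[of i j] unfolding c_def d_def by (auto simp: inner_diff_left)
          qed
          then show ?thesis by simp
        qed
        have "gR lam L S (c *\<^sub>R u i) = 0" using g xe by simp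
        then have "(2 * (- cp lam L (trace S) + 2 * cr lam L (trace S) * sigma i * c^2 + cw lam L * (sigma i)^2 * c^2) * sigma i
           + 2 * (- cq lam L + cw lam L * sigma i * c^2) * (sigma i)^2) *\<^sub>R x = 0"
          using gRc[of i lam L c] i(1) xe unfolding d_def by simp
        then have "c^2 = GG lam L (trace S) (sigma i)" using Kz[OF i(1)] False by simp
        then have "c^2 = (gamma i)^2" using gam[OF i(1)] by simp
        then have "c = gamma i \<or> c = - gamma i" by (simp add: power2_eq_iff)
        then have "x = (1 * gamma i) *\<^sub>R u i \<or> x = (-1 * gamma i) *\<^sub>R u i" using xe by auto
        then show ?thesis using i(1) by blast
      qed
    next
      assume "x \<in> {0} \<union> {((s::real) * gamma i) *\<^sub>R u i | s i. s \<in> {-1, 1} \<and> i \<in> {1..d}}"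
      then show "gR lam L S x = 0"
      proof
        assume "x \<in> {0}" then show ?thesis unfolding gR_def qf_def by simp
      next
        assume "x \<in> {((s::real) * gamma i) *\<^sub>R u i | s i. s \<in> {-1, 1} \<and> i \<in> {1..d}}"
        then show ?thesis using gR0 by blast
      qed
    qed
    then show ?thesis using ci by blast
  qed
  have C2: "\<forall>x. \<exists>H. is_hessian R H x" unfolding R using hess_exists[OF sym] by blast
  have C3: "\<forall>H. is_hessian R H 0 \<longrightarrow> neg_def H"
  proof (intro allI impI)
    fix H assume H: "is_hessian R H 0"
    show "neg_def H" unfolding neg_def_def
    proof (intro allI impI)
      fix v :: "real^'n" assume v: "v \<noteq> 0"
      have "H *v v = HR lam L S 0 v" using hess_unique[OF sym] H unfolding R by blast
      also have "\<dots> = (2 * (- cp lam L (trace S))) *\<^sub>R (S *v v) + (2 * (- cq lam L)) *\<^sub>R ((S ** S) *v v)"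
        unfolding HR_def qf_def by simp
      finally have "v \<bullet> (H *v v) = - (2 * cp lam L (trace S)) * (v \<bullet> (S *v v)) - (2 * cq lam L) * qf (S ** S) v"
        unfolding qf_def by (simp add: inner_diff_right inner_minus_right)
      moreover have "v \<bullet> (S *v v) > 0" using pd v unfolding pos_def_def by blast
      then have "2 * cp lam L (trace S) * (v \<bullet> (S *v v)) > 0" using cps by simp
      moreover have "qf (S ** S) v \<ge> 0" unfolding qSS_sq by simp
      then have "2 * cq lam L * qf (S ** S) v \<ge> 0" using cps by simp
      ultimately show "v \<bullet> (H *v v) < 0" by linarith
    qed
  qed
  have aS0: "qf S y \<ge> 0" for y
    unfolding qS_sum using sp unfolding d_def by (intro sum_nonneg mult_nonneg_nonneg) (auto simp: less_imp_le)
  have bS0: "qf (S ** S) y \<ge> 0" for y unfolding qSS_sq by simp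
  have C4: "local_max R 0"
  proof -
    define phi where "phi y = cr lam L (trace S) * qf S y + cw lam L * qf (S ** S) y" for y
    have qc: "isCont (qf A) y" if "transpose A = A" for A :: "real^'n^'n" and y
      using has_derivative_continuous[OF quad_deriv[OF that]] .
    have "isCont phi y" for y :: "real^'n" unfolding phi_def
      using qc[OF sym, of y] qc[OF symSS[OF sym], of y] by (intro continuous_intros) auto
    then have cont: "continuous_on UNIV phi" by (simp add: continuous_at_imp_continuous_on)
    have op: "open {y. phi y < cp lam L (trace S)}"
      by (rule open_Collect_less[OF cont continuous_on_const])
    have "phi 0 < cp lam L (trace S)" unfolding phi_def qf_def using cps by simp
    then obtain e where e: "e > 0" "ball 0 e \<subseteq> {y. phi y < cp lam L (trace S)}"
      using op unfolding open_contains_ball by blast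
    show ?thesis unfolding local_max_def
    proof (intro exI[of _ e] conjI ballI)
      show "e > 0" by fact
      fix y :: "real^'n" assume y: "y \<in> ball 0 e"
      then have py: "phi y < cp lam L (trace S)" using e by blast
      have R0: "R 0 = trace S" unfolding R R_alt qf_def by simp
      have "R y - R 0 = qf S y * (phi y - cp lam L (trace S)) - cq lam L * qf (S ** S) y"
        unfolding R R_alt phi_def qf_def[of S 0] qf_def[of "S ** S" 0] by (simp add: algebra_simps power2_eq_square)
      also have "\<dots> \<le> 0"
      proof -
        have "qf S y * (phi y - cp lam L (trace S)) \<le> 0" using aS0[of y] py by (intro mult_nonneg_nonpos) auto
        moreover have "cq lam L * qf (S ** S) y \<ge> 0" using cps bS0[of y] by simp
        ultimately show ?thesis by linarith
      qed
      finally show "R y \<le> R 0" by simp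
    qed
  qed
  have C5: "\<forall>i\<in>{1..d}. \<forall>s::real\<in>{-1, 1}. \<forall>H. is_hessian R H ((s * gamma i) *\<^sub>R u i) \<longrightarrow>
           (\<forall>j\<in>{1..d}. H *v u j = hev i j *\<^sub>R u j)"
    using hev_eq by blast
  have C6: "\<forall>s::real\<in>{-1, 1}. \<forall>H. is_hessian R H ((s * gamma 1) *\<^sub>R u 1) \<longrightarrow> pos_def H"
  proof (intro ballI allI impI)
    fix s :: real and H assume s: "s \<in> {-1, 1}" and H: "is_hessian R H ((s * gamma 1) *\<^sub>R u 1)"
    show "pos_def H"
    proof (rule pos_def_diag)
      fix j assume j: "j \<in> {1..CARD('n)}"
      then show "H *v u j = hev 1 j *\<^sub>R u j" using hev_eq[OF one s H] unfolding d_def by blast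
      show "hev 1 j > 0"
      proof (cases "j = 1")
        case True then show ?thesis using hev_diag_pos[OF one] by simp
      next
        case False then show ?thesis using hev_pos[OF one, of j] decr[of 1 j] j one unfolding d_def by simp
      qed
    qed
  qed
  have C7: "\<forall>i\<in>{2..d}. \<forall>s::real\<in>{-1, 1}. \<forall>H. is_hessian R H ((s * gamma i) *\<^sub>R u i) \<longrightarrow>
           (\<exists>c>0. has_eigenvalue H c) \<and> (\<exists>c<0. has_eigenvalue H c)"
  proof (intro ballI allI impI conjI)
    fix i s H assume i2: "i \<in> {2..d}" and s: "s \<in> {-1, 1::real}" and H: "is_hessian R H ((s * gamma i) *\<^sub>R u i)"
    have i: "i \<in> {1..d}" using i2 by simp
    have un: "u j \<noteq> 0" if "j \<in> {1..d}" for j using uu[of j] that unfolding d_def by auto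
    show "\<exists>c>0. has_eigenvalue H c"
      using hev_eq[OF i s H i] hev_diag_pos[OF i] un[OF i] unfolding has_eigenvalue_def by blast
    show "\<exists>c<0. has_eigenvalue H c"
      using hev_eq[OF i s H one] hev_neg[OF i one] decr[of 1 i] i2 one un[OF one] unfolding has_eigenvalue_def by auto
  qed
  have C8: "\<forall>s::real\<in>{-1, 1}. global_min R ((s * gamma 1) *\<^sub>R u 1)"
  proof (intro ballI)
    fix s :: real assume s: "s \<in> {-1, 1}"
    define c where "c = s * gamma 1"
    have c2: "c^2 = GG lam L (trace S) (sigma 1)" unfolding c_def by (rule cgam[OF one s])
    define as where "as = (cp lam L (trace S) + cq lam L * sigma 1) / (2 * (cr lam L (trace S) + cw lam L * sigma 1))"
    have s10: "sigma 1 > 0" using sp[OF one] .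
    have qa: "qf S (c *\<^sub>R u 1) = as" using qS[of 1 c] one s10 unfolding c2 GG_def as_def d_def by simp
    have qb: "qf (S ** S) (c *\<^sub>R u 1) = sigma 1 * as" using qSS[of 1 c] one s10 unfolding c2 GG_def as_def d_def
      by (simp add: power2_eq_square)
    show "global_min R ((s * gamma 1) *\<^sub>R u 1)" unfolding global_min_def c_def[symmetric]
    proof
      fix y
      have bl: "qf (S ** S) y \<le> sigma 1 * qf S y"
        unfolding qS_sum qSS_sum sum_distrib_left
      proof (rule sum_mono)
        fix j assume j: "j \<in> {1..CARD('n)}"
        have "(sigma j)^2 \<le> sigma 1 * sigma j" using s1[of j] sp[of j] j unfolding d_def
          by (simp add: power2_eq_square mult_right_mono)
        then show "(sigma j)^2 * (y \<bullet> u j)^2 \<le> sigma 1 * (sigma j * (y \<bullet> u j)^2)"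
          using mult_right_mono[of "(sigma j)^2" "sigma 1 * sigma j" "(y \<bullet> u j)^2"] by (simp add: mult.assoc)
      qed
      show "R (c *\<^sub>R u 1) \<le> R y" unfolding R R_alt qa qb
        using gmin_arith[OF cps(3) cps(4) s10 less_imp_le[OF cps(1)] less_imp_le[OF cps(2)] pw_le[OF lam L t0]
            aS0[of y] bS0[of y] bl as_def, of "trace S"]
        by (simp add: mult.assoc)
    qed
  qed
  have C9: "\<forall>i\<in>{2..d}. \<forall>s::real\<in>{-1, 1}. strict_saddle R ((s * gamma i) *\<^sub>R u i)"
  proof (intro ballI)
    fix i s assume i2: "i \<in> {2..d}" and s: "s \<in> {-1, 1::real}"
    have i: "i \<in> {1..d}" using i2 by simp
    have cr: "(s * gamma i) *\<^sub>R u i \<in> crit R" unfolding R crit_iff[OF sym] using gR0[OF i s] .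
    obtain H where H: "is_hessian R H ((s * gamma i) *\<^sub>R u i)" using C2 by blast
    have "u 1 \<noteq> 0" using uu[of 1] one unfolding d_def by auto
    then have "has_eigenvalue H (hev i 1)" using hev_eq[OF i s H one] unfolding has_eigenvalue_def by blast
    moreover have "hev i 1 < 0" using hev_neg[OF i one] decr[of 1 i] i2 one by auto
    ultimately show "strict_saddle R ((s * gamma i) *\<^sub>R u i)" unfolding strict_saddle_def using cr H by blast
  qed
  show ?thesis using critset C2 C3 C4 C5 C6 C7 C8 C9 by blast
qed

end
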